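(* Let $0<\beta_1<\beta_2$. There is a unique $a=a(\beta_1,\beta_2)\in(0,1/\beta_1)$ satisfying $a\beta_1-1+(a\beta_2+1)e^{-a(\beta_1+\beta_2)}=0$. Moreover, for every $c\in(0,1)$, the limit $\lim a(\beta_1,\beta_2)\,\beta_1$, taken as $\beta_1/\beta_2\to c$ and $\beta_2\to0$, exists and lies in $(0,1)$. *)

theory Defs
  imports "HOL-Analysis.Analysis"
begin

definition aeq :: "real \<Rightarrow> real \<Rightarrow> real \<Rightarrow> bool" where
  "aeq b1 b2 a \<longleftrightarrow> a * b1 - 1 + (a * b2 + 1) * exp (- a * (b1 + b2)) = 0"

definition aroot :: "real \<Rightarrow> real \<Rightarrow> real" where
  "aroot b1 b2 = (THE a. 0 < a \<and> a < 1 / b1 \<and> aeq b1 b2 a)"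

definition ratio_filter :: "real \<Rightarrow> (real \<times> real) filter" where
  "ratio_filter c = inf (inf (filtercomap (\<lambda>(b1, b2). b1 / b2) (nhds c))
                               (filtercomap snd (at_right 0)))
                          (principal {(b1, b2). 0 < b1 \<and> b1 < b2})"

end

theory Submission
  imports Defs
begin

definition FF :: "real \<Rightarrow> real \<Rightarrow> real" where
  "FF r x = ln (1 - x) + x * (1 + r) - ln (1 + r * x)"

lemma FF_deriv:
  assumes "r > 1" "0 \<le> x" "x < 1"
  shows "DERIV (FF r) x :> (1 + r) * x * (r - 1 - r * x) / ((1 - x) * (1 + r * x))"
proof -
  have p: "1 + r * x > 0" using assms by (simp add: add_pos_nonneg)
  have "DERIV (FF r) x :> (- 1) / (1 - x) + (1 + r) - r / (1 + r * x)"
    unfolding FF_def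
    by (rule derivative_eq_intros refl | use assms p in simp)+
  moreover have "(- 1) / (1 - x) + (1 + r) - r / (1 + r * x) = (1 + r) * x * (r - 1 - r * x) / ((1 - x) * (1 + r * x))"
    using assms p by (simp add: field_simps)
  ultimately show ?thesis by simp
qed

lemma FF_cont: assumes "r > 1" "0 \<le> a" "b < 1" shows "continuous_on {a..b} (FF r)"
proof -
  have "\<forall>x\<in>{a..b}. isCont (FF r) x"
  proof
    fix x assume x: "x \<in> {a..b}"
    hence "0 \<le> x" "x < 1" using assms by auto
    then show "isCont (FF r) x" using FF_deriv[OF assms(1)] DERIV_isCont by blast
  qed
  thus ?thesis by (simp add: continuous_at_imp_continuous_on)
qed

lemma FF_root:
  assumes r: "r > 1"
  shows "\<exists>x. 0 < x \<and> x < 1 \<and> (\<forall>y. 0 < y \<and> y < 1 \<longrightarrow> (FF r y > 0 \<longleftrightarrow> y < x) \<and> (FF r y < 0 \<longleftrightarrow> x < y))"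
proof -
  define x0 where "x0 = (r - 1) / r"
  have x0: "0 < x0" "x0 < 1" using r by (auto simp: x0_def field_simps)
  have inc: "FF r u < FF r v" if "0 \<le> u" "u < v" "v \<le> x0" for u v
  proof (rule DERIV_pos_imp_increasing_open[OF that(2)])
    fix y assume y: "u < y" "y < v"
    have "r * y < r * v" using y r by simp
    moreover have "r * v \<le> r - 1" using that(3) r unfolding x0_def by (simp add: field_simps)
    ultimately have "r - 1 - r * y > 0" by linarith
    moreover have "(1 - y) * (1 + r * y) > 0" using y that x0 r by (simp add: add_pos_nonneg)
    ultimately have "(1 + r) * y * (r - 1 - r * y) / ((1 - y) * (1 + r * y)) > 0"
      using y that r by simp
    then show "\<exists>d. DERIV (FF r) y :> d \<and> d > 0" using FF_deriv[OF r, of y] y that x0 by auto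
  next
    show "continuous_on {u..v} (FF r)" using FF_cont[OF r] that x0 by simp
  qed
  have dec: "FF r u > FF r v" if "x0 \<le> u" "u < v" "v < 1" for u v
  proof (rule DERIV_neg_imp_decreasing_open[OF that(2)])
    fix y assume y: "u < y" "y < v"
    have "r * u < r * y" using y r by simp
    moreover have "r - 1 \<le> r * u" using that(1) r unfolding x0_def by (simp add: field_simps)
    ultimately have "r - 1 - r * y < 0" by linarith
    moreover have "(1 - y) * (1 + r * y) > 0" using y that x0 r by (simp add: add_pos_nonneg)
    moreover have "(1 + r) * y > 0" using y that x0 r by simp
    ultimately have "(1 + r) * y * (r - 1 - r * y) / ((1 - y) * (1 + r * y)) < 0"
      by (simp add: divide_neg_pos mult_pos_neg)
    then show "\<exists>d. DERIV (FF r) y :> d \<and> d < 0" using FF_deriv[OF r, of y] y that x0 by auto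
  next
    show "continuous_on {u..v} (FF r)" using FF_cont[OF r] that x0 by simp
  qed
  have F0: "FF r 0 = 0" by (simp add: FF_def)
  have pos: "FF r y > 0" if "0 < y" "y \<le> x0" for y using inc[of 0 y] that F0 by simp
  define x1 where "x1 = 1 - exp (- (1 + r))"
  have x1: "0 < x1" "x1 < 1" using r by (auto simp: x1_def)
  have "FF r x1 < 0"
  proof -
    have "ln (1 - x1) = - (1 + r)" by (simp add: x1_def)
    moreover have "ln (1 + r * x1) > 0" using x1 r by (simp add: ln_gt_zero)
    moreover have "x1 * (1 + r) < 1 + r" using x1 r by simp
    ultimately show ?thesis unfolding FF_def by linarith
  qed
  hence x01: "x0 < x1" using pos[of x1] x1 by force
  obtain x where x: "x0 \<le> x" "x \<le> x1" "FF r x = 0"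
    using IVT2'[of "FF r" x1 0 x0] FF_cont[OF r, of x0 x1] x0 x1 x01 \<open>FF r x1 < 0\<close> pos[of x0]
    by auto
  have "x \<noteq> x0" using pos[of x0] x0 x by auto
  hence xx: "x0 < x" "x < 1" using x x1 by auto
  have main: "(0 < FF r y \<longleftrightarrow> y < x) \<and> (FF r y < 0 \<longleftrightarrow> x < y)" if y: "0 < y" "y < 1" for y
  proof -
    consider "y \<le> x0" | "x0 < y" "y < x" | "y = x" | "x < y" by linarith
    then show ?thesis
    proof cases
      case 1 then show ?thesis using pos[of y] y xx by auto
    next
      case 2 then show ?thesis using dec[of y x] xx x by auto
    next
      case 3 then show ?thesis using x by auto
    next
      case 4 then show ?thesis using dec[of x y] xx x y by auto
    qed
  qed
  show ?thesis using main xx x0 by (intro exI[of _ x]) auto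
qed

definition XX :: "real \<Rightarrow> real" where
  "XX r = (THE x. 0 < x \<and> x < 1 \<and> FF r x = 0)"

lemma XX_prop:
  assumes r: "r > 1"
  shows "0 < XX r" "XX r < 1" "FF r (XX r) = 0"
    "\<And>y. 0 < y \<Longrightarrow> y < 1 \<Longrightarrow> FF r y > 0 \<longleftrightarrow> y < XX r"
    "\<And>y. 0 < y \<Longrightarrow> y < 1 \<Longrightarrow> FF r y < 0 \<longleftrightarrow> XX r < y"
    "\<And>y. 0 < y \<Longrightarrow> y < 1 \<Longrightarrow> FF r y = 0 \<longleftrightarrow> y = XX r"
proof -
  obtain x where x: "0 < x" "x < 1" and
    h: "\<And>y. 0 < y \<and> y < 1 \<Longrightarrow> (FF r y > 0 \<longleftrightarrow> y < x) \<and> (FF r y < 0 \<longleftrightarrow> x < y)"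
    using FF_root[OF r] by blast
  have z: "FF r y = 0 \<longleftrightarrow> y = x" if "0 < y" "y < 1" for y
    using h[of y] that by (cases "y < x"; cases "x < y") auto
  have "XX r = x" unfolding XX_def
    by (rule the_equality) (use x z in auto)
  then show "0 < XX r" "XX r < 1" "FF r (XX r) = 0"
    "\<And>y. 0 < y \<Longrightarrow> y < 1 \<Longrightarrow> FF r y > 0 \<longleftrightarrow> y < XX r"
    "\<And>y. 0 < y \<Longrightarrow> y < 1 \<Longrightarrow> FF r y < 0 \<longleftrightarrow> XX r < y"
    "\<And>y. 0 < y \<Longrightarrow> y < 1 \<Longrightarrow> FF r y = 0 \<longleftrightarrow> y = XX r"
    using x z h by simp_all
qed

lemma aeq_iff:
  assumes b: "0 < b1" "0 < b2"
  shows "(0 < a \<and> a < 1 / b1 \<and> aeq b1 b2 a) \<longleftrightarrow>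
         (0 < a * b1 \<and> a * b1 < 1 \<and> FF (b2 / b1) (a * b1) = 0)"
proof -
  define y where "y = a * b1"
  define r where "r = b2 / b1"
  have r: "r > 0" using b by (simp add: r_def)
  have e1: "a * b2 = y * r" and e2: "- a * (b1 + b2) = - (y * (1 + r))"
    using b by (simp_all add: y_def r_def field_simps)
  have iv: "(0 < a \<and> a < 1 / b1) \<longleftrightarrow> (0 < y \<and> y < 1)"
    using b by (auto simp: y_def field_simps zero_less_mult_iff)
  have key: "aeq b1 b2 a \<longleftrightarrow> FF r y = 0" if y: "0 < y" "y < 1"
  proof -
    have "r * y > 0" using r y by simp
    then have p: "1 + r * y > 0" by linarith
    have "aeq b1 b2 a \<longleftrightarrow> 1 - y = (1 + r * y) * exp (- (y * (1 + r)))"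
      unfolding aeq_def e1 e2 y_def[symmetric] by (simp add: mult.commute[of y r] add.commute[of "r * y"]) linarith
    also have "\<dots> \<longleftrightarrow> ln (1 - y) = ln ((1 + r * y) * exp (- (y * (1 + r))))"
      using y p by (intro ln_inj_iff[symmetric]) auto
    also have "\<dots> \<longleftrightarrow> ln (1 - y) = ln (1 + r * y) - y * (1 + r)"
      using p by (simp add: ln_mult)
    also have "\<dots> \<longleftrightarrow> FF r y = 0" unfolding FF_def by linarith
    finally show ?thesis .
  qed
  show ?thesis using iv key unfolding y_def[symmetric] r_def[symmetric] by blast
qed

lemma aroot_eq:
  assumes b: "0 < b1" "b1 < b2"
  shows "aroot b1 b2 = XX (b2 / b1) / b1"
    and "0 < XX (b2 / b1) / b1 \<and> XX (b2 / b1) / b1 < 1 / b1 \<and> aeq b1 b2 (XX (b2 / b1) / b1)"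
    and "\<And>a. 0 < a \<and> a < 1 / b1 \<and> aeq b1 b2 a \<Longrightarrow> a = XX (b2 / b1) / b1"
proof -
  have r: "b2 / b1 > 1" using b by simp
  have b2: "0 < b2" using b by simp
  note P = XX_prop[OF r]
  have m: "XX (b2 / b1) / b1 * b1 = XX (b2 / b1)" using b by simp
  have c1: "0 < XX (b2 / b1) / b1 * b1 \<and> XX (b2 / b1) / b1 * b1 < 1 \<and> FF (b2 / b1) (XX (b2 / b1) / b1 * b1) = 0"
    unfolding m using P(1-3) by blast
  show ex: "0 < XX (b2 / b1) / b1 \<and> XX (b2 / b1) / b1 < 1 / b1 \<and> aeq b1 b2 (XX (b2 / b1) / b1)"
    using aeq_iff[OF b(1) b2, of "XX (b2 / b1) / b1"] c1 by blast
  show un: "\<And>a. 0 < a \<and> a < 1 / b1 \<and> aeq b1 b2 a \<Longrightarrow> a = XX (b2 / b1) / b1"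
  proof -
    fix a assume "0 < a \<and> a < 1 / b1 \<and> aeq b1 b2 a"
    then have "0 < a * b1 \<and> a * b1 < 1 \<and> FF (b2 / b1) (a * b1) = 0"
      using aeq_iff[OF b(1) b2, of a] by simp
    then have "a * b1 = XX (b2 / b1)" using P(6) by blast
    then show "a = XX (b2 / b1) / b1" using b by (simp add: eq_divide_eq)
  qed
  show "aroot b1 b2 = XX (b2 / b1) / b1" unfolding aroot_def
    using ex un by (rule the_equality)
qed

lemma FF_tendsto:
  assumes "0 < y" "y < 1" "r0 > 1"
  shows "((\<lambda>r. FF r y) \<longlongrightarrow> FF r0 y) (at r0)"
proof -
  have "r0 * y > 0" using assms by simp
  then have "1 + r0 * y \<noteq> 0" by linarith
  then show ?thesis unfolding FF_def using assms
    by (intro tendsto_intros) auto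
qed

lemma XX_cont:
  assumes r0: "r0 > 1"
  shows "isCont XX r0"
  unfolding isCont_def tendsto_iff
proof (intro allI impI)
  fix \<epsilon> :: real assume \<epsilon>: "\<epsilon> > 0"
  define L where "L = XX r0"
  have L: "0 < L" "L < 1" using XX_prop[OF r0] by (auto simp: L_def)
  define e where "e = min \<epsilon> (min (L / 2) ((1 - L) / 2))"
  have e0: "0 < e" "e \<le> \<epsilon>" "e \<le> L / 2" "e \<le> (1 - L) / 2" using L \<epsilon> unfolding e_def by (auto simp: min_def)
  have "L + e < 1" using e0(4) L(2) by (simp add: field_simps)
  then have e: "0 < e" "e \<le> \<epsilon>" "e < L" "L + e < 1" using e0 L by simp_all
  have y1: "FF r0 (L - e) > 0" using XX_prop(4)[OF r0, of "L - e"] e L by (simp add: L_def)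
  have y2: "FF r0 (L + e) < 0" using XX_prop(5)[OF r0, of "L + e"] e L by (simp add: L_def)
  have ev1: "eventually (\<lambda>r. FF r (L - e) > 0) (at r0)"
    using order_tendstoD(1)[OF FF_tendsto[of "L - e" r0] y1] e L r0 by simp
  have ev2: "eventually (\<lambda>r. FF r (L + e) < 0) (at r0)"
    using order_tendstoD(2)[OF FF_tendsto[of "L + e" r0] y2] e L r0 by simp
  have ev3: "eventually (\<lambda>r. r > 1) (at r0)"
    using order_tendstoD(1)[OF tendsto_ident_at r0] .
  show "eventually (\<lambda>r. dist (XX r) (XX r0) < \<epsilon>) (at r0)"
    using ev1 ev2 ev3
  proof eventually_elim
    case (elim r)
    have a: "L - e < XX r" using XX_prop(4)[OF elim(3), of "L - e"] elim(1) e L by simp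
    have b: "XX r < L + e" using XX_prop(5)[OF elim(3), of "L + e"] elim(2) e L by simp
    show ?case using a b e unfolding dist_real_def L_def by linarith
  qed
qed

theorem lemma3p1:
  shows "(\<forall>b1 b2 :: real. 0 < b1 \<and> b1 < b2 \<longrightarrow>
            (\<exists>!a. 0 < a \<and> a < 1 / b1 \<and> aeq b1 b2 a))
       \<and> (\<forall>c :: real. 0 < c \<and> c < 1 \<longrightarrow>
            (\<exists>L. 0 < L \<and> L < 1 \<and>
               ((\<lambda>(b1, b2). aroot b1 b2 * b1) \<longlongrightarrow> L) (ratio_filter c)))"
proof (intro conjI allI impI)
  fix b1 b2 :: real assume b: "0 < b1 \<and> b1 < b2"
  show "\<exists>!a. 0 < a \<and> a < 1 / b1 \<and> aeq b1 b2 a"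
    using aroot_eq(2,3)[of b1 b2] b by blast
next
  fix c :: real assume c: "0 < c \<and> c < 1"
  define r0 where "r0 = inverse c"
  have r0: "r0 > 1" using c by (simp add: r0_def one_less_inverse)
  have lim1: "((\<lambda>(b1, b2). b1 / b2) \<longlongrightarrow> c) (ratio_filter c)"
  proof -
    have "ratio_filter c \<le> filtercomap (\<lambda>(b1, b2). b1 / b2) (nhds c)"
      unfolding ratio_filter_def by (meson inf_le1 order_trans)
    then show ?thesis using filterlim_filtercomap filterlim_mono by blast
  qed
  have ev: "eventually (\<lambda>p. p \<in> {(b1, b2). 0 < b1 \<and> b1 < b2}) (ratio_filter c)"
  proof -
    have "ratio_filter c \<le> principal {(b1, b2). 0 < b1 \<and> b1 < b2}"
      unfolding ratio_filter_def by (rule inf_le2)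
    then show ?thesis by (simp add: le_principal)
  qed
  have lim2: "((\<lambda>p. XX (inverse ((\<lambda>(b1, b2). b1 / b2) p))) \<longlongrightarrow> XX r0) (ratio_filter c)"
    unfolding r0_def
    by (rule isCont_tendsto_compose[OF XX_cont[OF r0[unfolded r0_def]]])
       (rule tendsto_inverse[OF lim1], use c in simp)
  have lim3: "((\<lambda>(b1, b2). aroot b1 b2 * b1) \<longlongrightarrow> XX r0) (ratio_filter c)"
  proof (rule tendsto_cong[THEN iffD1, OF _ lim2])
    show "eventually (\<lambda>p. XX (inverse ((\<lambda>(b1, b2). b1 / b2) p)) = (\<lambda>(b1, b2). aroot b1 b2 * b1) p) (ratio_filter c)"
      using ev
    proof eventually_elim
      case (elim p)
      obtain b1 b2 where p: "p = (b1, b2)" by force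
      have b: "0 < b1" "b1 < b2" using elim p by auto
      show ?case using aroot_eq(1)[OF b] b by (simp add: p)
    qed
  qed
  show "\<exists>L. 0 < L \<and> L < 1 \<and> ((\<lambda>(b1, b2). aroot b1 b2 * b1) \<longlongrightarrow> L) (ratio_filter c)"
    using lim3 XX_prop(1,2)[OF r0] by blast
qed

end
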